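(* Let $\pi$ be a probability measure on $\Omega_X\times\mathbb{R}$, let $\mu:\Omega_X\to\mathbb{R}$ be a fixed measurable predictor, and let $(X_1,Y_1),\dots,(X_{N+1},Y_{N+1})$ be i.i.d. with law $\pi$ and independent of $\mu$. Let $J=\{1,\dots,N+1\}$ and $s_k=|\mu(X_k)-Y_k|$. For each ordered pair $i\neq j$ in $J$ let $K_{ij}:\Omega_X\times\Omega_X\to[0,\infty)$ be a kernel of the form $K_{ij}=\Phi\big(\{(X_l,Y_l):l\in J\setminus\{i,j\}\}\big)$ for a fixed measurable map $\Phi$ of the (unordered) multiset of the remaining data points (in particular, $K_{ij}=K$ a fixed kernel is allowed). Define $$p_{ik;j}=\frac{K_{ij}(X_i,X_k)}{\sum_{l\in J\setminus\{i,j\}}K_{ij}(X_i,X_l)},\qquad \hat{\bar s}_{ij}=\sum_{k\in J\setminus\{i,j\}}p_{ik;j}\,s_k,\qquad s^+_{ij}=\frac{|\mu(X_i)-Y_i|}{\hat{\bar s}_{ij}},$$ assuming all denominators and all $\hat{\bar s}_{ij}$ are positive, and set $s^+_i=s^+_{i(N+1)}$ for $i=1,\dots,N$. For $\alpha\in[0,1]$ let $Q$ be the $\lceil(1-\alpha)(N+1)\rceil$-th smallest value among $\{\hat{\bar s}_{(N+1)i}\,s^+_i\}_{i=1}^N$ (with $Q=+\infty$ if $\lceil(1-\alpha)(N+1)\rceil>N$), and define $C^{+\alpha}_{N+1}=[\mu(X_{N+1})-Q,\ \mu(X_{N+1})+Q]$. Then, with probability taken jointly over all $N+1$ data points, $$\mathbb{P}\big(Y_{N+1}\in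 C^{+\alpha}_{N+1}\big)\ge 1-2\alpha.$$
   Context: Jackknife+ rescaled-score conformal regression: $(X_i,Y_i)_{i\le N}$ is the calibration set and $(X_{N+1},Y_{N+1})$ the test point; note $\hat{\bar s}_{(N+1)i}$ and $s^+_i$ only use calibration labels, so $C^{+\alpha}_{N+1}$ is computable without $Y_{N+1}$. *)

theory Defs
  imports "HOL-Probability.Probability" "HOL-Library.Multiset"
begin

text \<open>Data: \<open>\<omega> k = (X_k, Y_k)\<close> for \<open>k \<in> J = {1..N+1}\<close>.\<close>

definition Jset :: "nat \<Rightarrow> nat set" where
  "Jset N = {1..N+1}"

definition score :: "('x \<Rightarrow> real) \<Rightarrow> (nat \<Rightarrow> 'x \<times> real) \<Rightarrow> nat \<Rightarrow> real" where
  "score \<mu> \<omega> k = \<bar>\<mu> (fst (\<omega> k)) - snd (\<omega> k)\<bar>"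

definition Kij :: "nat \<Rightarrow> (('x \<times> real) multiset \<Rightarrow> 'x \<Rightarrow> 'x \<Rightarrow> real)
    \<Rightarrow> (nat \<Rightarrow> 'x \<times> real) \<Rightarrow> nat \<Rightarrow> nat \<Rightarrow> 'x \<Rightarrow> 'x \<Rightarrow> real" where
  "Kij N \<Phi> \<omega> i j = \<Phi> (image_mset \<omega> (mset_set (Jset N - {i, j})))"

definition pw :: "nat \<Rightarrow> (('x \<times> real) multiset \<Rightarrow> 'x \<Rightarrow> 'x \<Rightarrow> real)
    \<Rightarrow> (nat \<Rightarrow> 'x \<times> real) \<Rightarrow> nat \<Rightarrow> nat \<Rightarrow> nat \<Rightarrow> real" where
  "pw N \<Phi> \<omega> i k j =
     Kij N \<Phi> \<omega> i j (fst (\<omega> i)) (fst (\<omega> k)) /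
     (\<Sum>l\<in>Jset N - {i, j}. Kij N \<Phi> \<omega> i j (fst (\<omega> i)) (fst (\<omega> l)))"

definition shat :: "nat \<Rightarrow> ('x \<Rightarrow> real) \<Rightarrow> (('x \<times> real) multiset \<Rightarrow> 'x \<Rightarrow> 'x \<Rightarrow> real)
    \<Rightarrow> (nat \<Rightarrow> 'x \<times> real) \<Rightarrow> nat \<Rightarrow> nat \<Rightarrow> real" where
  "shat N \<mu> \<Phi> \<omega> i j = (\<Sum>k\<in>Jset N - {i, j}. pw N \<Phi> \<omega> i k j * score \<mu> \<omega> k)"

definition splus :: "nat \<Rightarrow> ('x \<Rightarrow> real) \<Rightarrow> (('x \<times> real) multiset \<Rightarrow> 'x \<Rightarrow> 'x \<Rightarrow> real)
    \<Rightarrow> (nat \<Rightarrow> 'x \<times> real) \<Rightarrow> nat \<Rightarrow> nat \<Rightarrow> real" where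
  "splus N \<mu> \<Phi> \<omega> i j = \<bar>\<mu> (fst (\<omega> i)) - snd (\<omega> i)\<bar> / shat N \<mu> \<Phi> \<omega> i j"

text \<open>The \<open>k\<close>-th smallest (\<open>k \<ge> 1\<close>) of a finite list of reals, with value \<open>+\<infinity>\<close>
  if \<open>k\<close> exceeds the length. (For \<open>k = 0\<close>, which only occurs for \<open>\<alpha> = 1\<close> where
  the claim is trivial, this yields the smallest value.)\<close>
definition kth_smallest :: "nat \<Rightarrow> real list \<Rightarrow> ereal" where
  "kth_smallest k xs = (if k > length xs then \<infinity> else ereal (sort xs ! (k - 1)))"

definition Qval :: "nat \<Rightarrow> real \<Rightarrow> ('x \<Rightarrow> real) \<Rightarrow> (('x \<times> real) multiset \<Rightarrow> 'x \<Rightarrow> 'x \<Rightarrow> real)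
    \<Rightarrow> (nat \<Rightarrow> 'x \<times> real) \<Rightarrow> ereal" where
  "Qval N \<alpha> \<mu> \<Phi> \<omega> =
     kth_smallest (nat \<lceil>(1 - \<alpha>) * real (N + 1)\<rceil>)
       (map (\<lambda>i. shat N \<mu> \<Phi> \<omega> (N + 1) i * splus N \<mu> \<Phi> \<omega> i (N + 1)) [1..<N + 1])"

definition Cplus :: "nat \<Rightarrow> real \<Rightarrow> ('x \<Rightarrow> real) \<Rightarrow> (('x \<times> real) multiset \<Rightarrow> 'x \<Rightarrow> 'x \<Rightarrow> real)
    \<Rightarrow> (nat \<Rightarrow> 'x \<times> real) \<Rightarrow> real set" where
  "Cplus N \<alpha> \<mu> \<Phi> \<omega> =
     {y. ereal (\<mu> (fst (\<omega> (N + 1)))) - Qval N \<alpha> \<mu> \<Phi> \<omega> \<le> ereal y \<and>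
         ereal y \<le> ereal (\<mu> (fst (\<omega> (N + 1)))) + Qval N \<alpha> \<mu> \<Phi> \<omega>}"

end

theory Submission
  imports Defs
begin


lemma card_pred_sets:
  assumes fin: "finite I" and Q: "\<And>i. i \<in> I \<Longrightarrow> {\<omega>\<in>space M. Q i \<omega>} \<in> sets M"
  shows "{\<omega>\<in>space M. k \<le> card {i\<in>I. Q i \<omega>}} \<in> sets M"
proof -
  define f where "f \<omega> = (\<Sum>i\<in>I. indicator {\<omega>\<in>space M. Q i \<omega>} \<omega> :: real)" for \<omega>
  have fm: "f \<in> borel_measurable M" unfolding f_def
    using Q by (intro borel_measurable_sum borel_measurable_indicator) auto
  have eq: "real (card {i\<in>I. Q i \<omega>}) = f \<omega>" if "\<omega> \<in> space M" for \<omega>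
  proof -
    have "(\<Sum>i\<in>I. if Q i \<omega> then 1 else 0) = (\<Sum>i\<in>{i\<in>I. Q i \<omega>}. 1::real)"
      by (rule sum.inter_filter[symmetric, OF fin])
    then have "real (card {i\<in>I. Q i \<omega>}) = (\<Sum>i\<in>I. if Q i \<omega> then 1 else 0)" by simp
    also have "\<dots> = f \<omega>" unfolding f_def using that by (intro sum.cong) (auto simp: indicator_def)
    finally show ?thesis .
  qed
  have "{\<omega>\<in>space M. k \<le> card {i\<in>I. Q i \<omega>}} = {\<omega>\<in>space M. real k \<le> f \<omega>}"
    using eq by (auto simp flip: eq)
  also have "\<dots> \<in> sets M" using fm by measurable
  finally show ?thesis .
qed


lemma length_filter_sort: "length (filter P (sort xs)) = length (filter P xs)"
proof -
  have "mset (filter P (sort xs)) = mset (filter P xs)" by simp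
  then show ?thesis by (metis size_mset)
qed

lemma sorted_kth_iff:
  fixes xs :: "real list"
  assumes k: "1 \<le> k" "k \<le> length xs"
  shows "s \<le> sort xs ! (k - 1) \<longleftrightarrow> length (filter (\<lambda>v. v < s) xs) < k"
proof -
  define ys where "ys = sort xs"
  have sy: "sorted ys" and ly: "length ys = length xs" by (simp_all add: ys_def)
  have L: "length (filter (\<lambda>v. v < s) xs) = card {n. n < length ys \<and> ys ! n < s}"
  proof -
    have "length (filter (\<lambda>v. v < s) xs) = length (filter (\<lambda>v. v < s) ys)"
      by (simp add: ys_def length_filter_sort)
    also have "\<dots> = card {n. n < length ys \<and> ys ! n < s}" by (rule length_filter_conv_card)
    finally show ?thesis .
  qed
  show ?thesis
  proof
    assume h: "s \<le> sort xs ! (k - 1)"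
    have "{n. n < length ys \<and> ys ! n < s} \<subseteq> {..<k-1}"
    proof
      fix n assume n: "n \<in> {n. n < length ys \<and> ys ! n < s}"
      show "n \<in> {..<k-1}"
      proof (rule ccontr)
        assume "n \<notin> {..<k-1}"
        then have "ys ! (k-1) \<le> ys ! n" using n sy by (auto intro: sorted_nth_mono)
        then show False using n h ys_def by auto
      qed
    qed
    then have "card {n. n < length ys \<and> ys ! n < s} \<le> k - 1" by (metis card_lessThan card_mono finite_lessThan)
    then show "length (filter (\<lambda>v. v < s) xs) < k" using L k by linarith
  next
    assume h: "length (filter (\<lambda>v. v < s) xs) < k"
    show "s \<le> sort xs ! (k - 1)"
    proof (rule ccontr)
      assume "\<not> s \<le> sort xs ! (k - 1)"
      then have lt: "ys ! (k-1) < s" by (simp add: ys_def)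
      have "{..<k} \<subseteq> {n. n < length ys \<and> ys ! n < s}"
      proof
        fix n assume "n \<in> {..<k}"
        then have "n \<le> k - 1" "n < length ys" using k ly by auto
        then have "ys ! n \<le> ys ! (k-1)" using sy k ly by (intro sorted_nth_mono) auto
        then show "n \<in> {n. n < length ys \<and> ys ! n < s}" using lt \<open>n < length ys\<close> by auto
      qed
      then have "k \<le> card {n. n < length ys \<and> ys ! n < s}"
        by (metis card_lessThan card_mono finite_Collect_conjI finite_Collect_less_nat)
      then show False using L h by linarith
    qed
  qed
qed


lemma bij_Diff2:
  assumes "bij_betw \<tau> J J" "a \<in> J" "b \<in> J"
  shows "bij_betw \<tau> (J - {a, b}) (J - {\<tau> a, \<tau> b})"
proof (rule bij_betw_DiffI[OF assms(1)])
  show "bij_betw \<tau> {a, b} {\<tau> a, \<tau> b}"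
    using assms by (intro bij_betw_subset[OF assms(1)]) auto
qed (use assms bij_betwE in auto)

lemma perm_Kij:
  assumes bij: "bij_betw \<tau> (Jset N) (Jset N)" and ab: "a \<in> Jset N" "b \<in> Jset N"
    and w: "\<forall>n\<in>Jset N. \<omega>' n = \<omega> (\<tau> n)"
  shows "Kij N \<Phi> \<omega>' a b = Kij N \<Phi> \<omega> (\<tau> a) (\<tau> b)"
proof -
  have fin: "finite (Jset N - {a, b})" by (simp add: Jset_def)
  have "image_mset \<omega>' (mset_set (Jset N - {a, b})) = image_mset (\<omega> \<circ> \<tau>) (mset_set (Jset N - {a, b}))"
    using w fin by (intro image_mset_cong) auto
  also have "\<dots> = image_mset \<omega> (image_mset \<tau> (mset_set (Jset N - {a, b})))"
    by (simp add: multiset.map_comp)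
  also have "image_mset \<tau> (mset_set (Jset N - {a, b})) = mset_set (\<tau> ` (Jset N - {a, b}))"
    using bij_Diff2[OF bij ab] by (intro image_mset_mset_set) (auto simp: bij_betw_def)
  also have "\<tau> ` (Jset N - {a, b}) = Jset N - {\<tau> a, \<tau> b}"
    using bij_Diff2[OF bij ab] by (auto simp: bij_betw_def)
  finally show ?thesis unfolding Kij_def by simp
qed

lemma perm_pw:
  assumes bij: "bij_betw \<tau> (Jset N) (Jset N)" and ab: "a \<in> Jset N" "b \<in> Jset N" "k \<in> Jset N"
    and w: "\<forall>n\<in>Jset N. \<omega>' n = \<omega> (\<tau> n)"
  shows "pw N \<Phi> \<omega>' a k b = pw N \<Phi> \<omega> (\<tau> a) (\<tau> k) (\<tau> b)"
proof -
  have K: "Kij N \<Phi> \<omega>' a b = Kij N \<Phi> \<omega> (\<tau> a) (\<tau> b)" by (rule perm_Kij[OF bij ab(1,2) w])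
  have "(\<Sum>l\<in>Jset N - {a, b}. Kij N \<Phi> \<omega>' a b (fst (\<omega>' a)) (fst (\<omega>' l)))
      = (\<Sum>l\<in>Jset N - {a, b}. Kij N \<Phi> \<omega> (\<tau> a) (\<tau> b) (fst (\<omega> (\<tau> a))) (fst (\<omega> (\<tau> l))))"
    using w ab K by (intro sum.cong) auto
  also have "\<dots> = (\<Sum>l\<in>Jset N - {\<tau> a, \<tau> b}. Kij N \<Phi> \<omega> (\<tau> a) (\<tau> b) (fst (\<omega> (\<tau> a))) (fst (\<omega> l)))"
    by (rule sum.reindex_bij_betw[OF bij_Diff2[OF bij ab(1,2)]])
  finally show ?thesis unfolding pw_def using K w ab by simp
qed

lemma perm_shat:
  assumes bij: "bij_betw \<tau> (Jset N) (Jset N)" and ab: "a \<in> Jset N" "b \<in> Jset N"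
    and w: "\<forall>n\<in>Jset N. \<omega>' n = \<omega> (\<tau> n)"
  shows "shat N \<mu> \<Phi> \<omega>' a b = shat N \<mu> \<Phi> \<omega> (\<tau> a) (\<tau> b)"
proof -
  have "shat N \<mu> \<Phi> \<omega>' a b = (\<Sum>k\<in>Jset N - {a, b}. pw N \<Phi> \<omega> (\<tau> a) (\<tau> k) (\<tau> b) * score \<mu> \<omega> (\<tau> k))"
    unfolding shat_def using perm_pw[OF bij ab _ w] w by (intro sum.cong) (auto simp: score_def)
  also have "\<dots> = shat N \<mu> \<Phi> \<omega> (\<tau> a) (\<tau> b)"
    unfolding shat_def by (rule sum.reindex_bij_betw[OF bij_Diff2[OF bij ab]])
  finally show ?thesis .
qed

lemma perm_splus:
  assumes bij: "bij_betw \<tau> (Jset N) (Jset N)" and ab: "a \<in> Jset N" "b \<in> Jset N"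
    and w: "\<forall>n\<in>Jset N. \<omega>' n = \<omega> (\<tau> n)"
  shows "splus N \<mu> \<Phi> \<omega>' a b = splus N \<mu> \<Phi> \<omega> (\<tau> a) (\<tau> b)"
  unfolding splus_def perm_shat[OF assms] using w ab by simp



lemma card_Jset: "card (Jset N) = N + 1" by (simp add: Jset_def)

context
  fixes MX :: "'x measure" and \<pi> :: "('x \<times> real) measure"
    and \<mu> :: "'x \<Rightarrow> real"
    and \<Phi> :: "('x \<times> real) multiset \<Rightarrow> 'x \<Rightarrow> 'x \<Rightarrow> real"
    and N :: nat
  assumes sets_\<pi>: "sets \<pi> = sets (MX \<Otimes>\<^sub>M borel)"
    and \<mu>_meas: "\<mu> \<in> borel_measurable MX"
    and \<Phi>_meas: "(\<lambda>(z, x, x'). \<Phi> (image_mset z (mset_set {..<N - 1})) x x')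
                   \<in> borel_measurable (PiM {..<N - 1} (\<lambda>_. \<pi>) \<Otimes>\<^sub>M MX \<Otimes>\<^sub>M MX)"
begin

lemma fst_meas: "fst \<in> measurable \<pi> MX"
  by (subst measurable_cong_sets[OF sets_\<pi> refl]) (rule measurable_fst)

lemma snd_meas: "snd \<in> borel_measurable \<pi>"
  by (subst measurable_cong_sets[OF sets_\<pi> refl]) (rule measurable_snd)

lemma fst_comp_meas: "a \<in> Jset N \<Longrightarrow> (\<lambda>\<omega>. fst (\<omega> a)) \<in> measurable (PiM (Jset N) (\<lambda>_. \<pi>)) MX"
  by (rule measurable_compose[OF measurable_component_singleton[of a "Jset N" "\<lambda>_. \<pi>"] fst_meas])

lemma score_meas: "a \<in> Jset N \<Longrightarrow> (\<lambda>\<omega>. score \<mu> \<omega> a) \<in> borel_measurable (PiM (Jset N) (\<lambda>_. \<pi>))"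
proof -
  assume a: "a \<in> Jset N"
  have 1: "(\<lambda>\<omega>. \<mu> (fst (\<omega> a))) \<in> borel_measurable (PiM (Jset N) (\<lambda>_. \<pi>))"
    by (rule measurable_compose[OF fst_comp_meas[OF a] \<mu>_meas])
  have 2: "(\<lambda>\<omega>. snd (\<omega> a)) \<in> borel_measurable (PiM (Jset N) (\<lambda>_. \<pi>))"
    by (rule measurable_compose[OF measurable_component_singleton[OF a] snd_meas])
  show ?thesis unfolding score_def using 1 2 by measurable
qed

lemma K_meas:
  assumes ij: "i \<in> Jset N" "j \<in> Jset N" "i \<noteq> j" and al: "a \<in> Jset N" "l \<in> Jset N"
  shows "(\<lambda>\<omega>. Kij N \<Phi> \<omega> i j (fst (\<omega> a)) (fst (\<omega> l))) \<in> borel_measurable (PiM (Jset N) (\<lambda>_. \<pi>))"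
proof -
  define D where "D = Jset N - {i, j}"
  have finD: "finite D" by (simp add: D_def Jset_def)
  have cD: "card D = N - 1" using ij unfolding D_def by (simp add: card_Jset card_Diff_subset)
  obtain e where e: "bij_betw e {0..<card D} D" using ex_bij_betw_nat_finite[OF finD] by blast
  have e': "bij_betw e {..<N - 1} D" using e cD by (simp add: atLeast0LessThan)
  define G where "G = (\<lambda>(z, x, x'). \<Phi> (image_mset z (mset_set {..<N - 1})) x x')"
  have eq: "Kij N \<Phi> \<omega> i j (fst (\<omega> a)) (fst (\<omega> l))
      = G ((\<lambda>n\<in>{..<N - 1}. \<omega> (e n)), fst (\<omega> a), fst (\<omega> l))" for \<omega>
  proof -
    have "image_mset (\<lambda>n\<in>{..<N - 1}. \<omega> (e n)) (mset_set {..<N - 1})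
        = image_mset (\<omega> \<circ> e) (mset_set {..<N - 1})"
      by (intro image_mset_cong) auto
    also have "\<dots> = image_mset \<omega> (image_mset e (mset_set {..<N - 1}))"
      by (simp add: multiset.map_comp)
    also have "image_mset e (mset_set {..<N - 1}) = mset_set D"
      using e' by (simp add: image_mset_mset_set bij_betw_def)
    finally have X: "image_mset (\<lambda>n\<in>{..<N - 1}. \<omega> (e n)) (mset_set {..<N - 1}) = image_mset \<omega> (mset_set D)" .
    show ?thesis unfolding G_def prod.case X Kij_def D_def by (rule refl)
  qed
  have inner: "(\<lambda>\<omega>. ((\<lambda>n\<in>{..<N - 1}. \<omega> (e n)), fst (\<omega> a), fst (\<omega> l)))
      \<in> measurable (PiM (Jset N) (\<lambda>_. \<pi>)) (PiM {..<N - 1} (\<lambda>_. \<pi>) \<Otimes>\<^sub>M MX \<Otimes>\<^sub>M MX)"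
  proof (intro measurable_Pair fst_comp_meas al measurable_restrict)
    fix n assume "n \<in> {..<N - 1}"
    then have "e n \<in> Jset N" using e' unfolding D_def by (auto dest: bij_betwE)
    then show "(\<lambda>\<omega>. \<omega> (e n)) \<in> measurable (PiM (Jset N) (\<lambda>_. \<pi>)) \<pi>"
      by (rule measurable_component_singleton)
  qed
  show ?thesis unfolding eq
    by (rule measurable_compose[OF inner \<Phi>_meas[folded G_def]])
qed

lemma pw_meas:
  assumes "i \<in> Jset N" "j \<in> Jset N" "i \<noteq> j" "k \<in> Jset N"
  shows "(\<lambda>\<omega>. pw N \<Phi> \<omega> i k j) \<in> borel_measurable (PiM (Jset N) (\<lambda>_. \<pi>))"
  unfolding pw_def using assms
  by (intro borel_measurable_divide borel_measurable_sum K_meas) auto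

lemma shat_meas:
  assumes "i \<in> Jset N" "j \<in> Jset N" "i \<noteq> j"
  shows "(\<lambda>\<omega>. shat N \<mu> \<Phi> \<omega> i j) \<in> borel_measurable (PiM (Jset N) (\<lambda>_. \<pi>))"
  unfolding shat_def using assms
  by (intro borel_measurable_times borel_measurable_sum pw_meas score_meas) auto

lemma splus_meas:
  assumes "i \<in> Jset N" "j \<in> Jset N" "i \<noteq> j"
  shows "(\<lambda>\<omega>. splus N \<mu> \<Phi> \<omega> i j) \<in> borel_measurable (PiM (Jset N) (\<lambda>_. \<pi>))"
proof -
  have "(\<lambda>\<omega>. splus N \<mu> \<Phi> \<omega> i j) = (\<lambda>\<omega>. score \<mu> \<omega> i / shat N \<mu> \<Phi> \<omega> i j)"
    by (simp add: splus_def score_def)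
  then show ?thesis using assms
    by (simp add: borel_measurable_divide score_meas shat_meas)
qed


lemma E_aux_sets:
  "{\<omega>\<in>space (PiM (Jset N) (\<lambda>_. \<pi>)). k \<le> card {i\<in>{1..<N+1}.
      shat N \<mu> \<Phi> \<omega> (N + 1) i * splus N \<mu> \<Phi> \<omega> i (N + 1) < score \<mu> \<omega> (N + 1)}}
    \<in> sets (PiM (Jset N) (\<lambda>_. \<pi>))"
proof (rule card_pred_sets)
  fix i assume i: "i \<in> {1..<N + 1}"
  then have iJ: "i \<in> Jset N" "N + 1 \<noteq> i" and N1J: "N + 1 \<in> Jset N" by (auto simp: Jset_def)
  have a: "(\<lambda>\<omega>. shat N \<mu> \<Phi> \<omega> (N + 1) i) \<in> borel_measurable (PiM (Jset N) (\<lambda>_. \<pi>))"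
    by (rule shat_meas[OF N1J iJ(1) iJ(2)])
  have b: "(\<lambda>\<omega>. splus N \<mu> \<Phi> \<omega> i (N + 1)) \<in> borel_measurable (PiM (Jset N) (\<lambda>_. \<pi>))"
    by (rule splus_meas[OF iJ(1) N1J not_sym[OF iJ(2)]])
  have "(\<lambda>\<omega>. shat N \<mu> \<Phi> \<omega> (N + 1) i * splus N \<mu> \<Phi> \<omega> i (N + 1)) \<in> borel_measurable (PiM (Jset N) (\<lambda>_. \<pi>))"
    by (rule borel_measurable_times[OF a b])
  moreover have "(\<lambda>\<omega>. score \<mu> \<omega> (N + 1)) \<in> borel_measurable (PiM (Jset N) (\<lambda>_. \<pi>))"
    by (rule score_meas[OF N1J])
  ultimately show "{\<omega>\<in>space (PiM (Jset N) (\<lambda>_. \<pi>)). shat N \<mu> \<Phi> \<omega> (N + 1) i * splus N \<mu> \<Phi> \<omega> i (N + 1) < score \<mu> \<omega> (N + 1)}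
     \<in> sets (PiM (Jset N) (\<lambda>_. \<pi>))" by (rule borel_measurable_less)
qed simp

lemma S_aux_sets:
  assumes j: "j \<in> Jset N"
  shows "{\<omega>\<in>space (PiM (Jset N) (\<lambda>_. \<pi>)). k \<le> card {i\<in>Jset N - {j}.
      splus N \<mu> \<Phi> \<omega> i j < splus N \<mu> \<Phi> \<omega> j i}} \<in> sets (PiM (Jset N) (\<lambda>_. \<pi>))"
proof (rule card_pred_sets)
  fix i assume i: "i \<in> Jset N - {j}"
  then have iJ: "i \<in> Jset N" "i \<noteq> j" by auto
  have "(\<lambda>\<omega>. splus N \<mu> \<Phi> \<omega> i j) \<in> borel_measurable (PiM (Jset N) (\<lambda>_. \<pi>))"
    by (rule splus_meas[OF iJ(1) j iJ(2)])
  moreover have "(\<lambda>\<omega>. splus N \<mu> \<Phi> \<omega> j i) \<in> borel_measurable (PiM (Jset N) (\<lambda>_. \<pi>))"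
    by (rule splus_meas[OF j iJ(1) not_sym[OF iJ(2)]])
  ultimately show "{\<omega>\<in>space (PiM (Jset N) (\<lambda>_. \<pi>)). splus N \<mu> \<Phi> \<omega> i j < splus N \<mu> \<Phi> \<omega> j i} \<in> sets (PiM (Jset N) (\<lambda>_. \<pi>))"
    by (rule borel_measurable_less)
qed (simp add: Jset_def)

end


lemma tournament_pairs:
  assumes fin: "finite St" and anti: "\<And>i j. \<not> (W i j \<and> W j i)"
  shows "2 * card {p\<in>St \<times> St. W (fst p) (snd p)} \<le> card St * card St - card St"
proof -
  let ?A = "{p\<in>St \<times> St. W (fst p) (snd p)}"
  let ?B = "prod.swap ` ?A"
  have dis: "?A \<inter> ?B = {}" using anti by auto
  have cB: "card ?B = card ?A" by (rule card_image) (simp add: inj_on_def)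
  have nW: "\<And>x. \<not> W x x" using anti by blast
  have sub: "?A \<union> ?B \<subseteq> St \<times> St - (\<lambda>x. (x,x)) ` St" using nW by auto
  have fA: "finite ?A" using fin by simp
  have e1: "card (?A \<union> ?B) = card ?A + card ?B" using dis fA by (simp add: card_Un_disjoint)
  have e2: "card (?A \<union> ?B) \<le> card (St \<times> St - (\<lambda>x. (x,x)) ` St)"
    using sub fin by (intro card_mono) auto
  have e3: "card (St \<times> St - (\<lambda>x. (x,x)) ` St) = card St * card St - card St"
    using fin by (subst card_Diff_subset) (auto simp: card_image inj_on_def card_cartesian_product)
  show ?thesis using cB e1 e2 e3 by linarith
qed

lemma tournament_bound:
  fixes k :: nat and J :: "'a set"
  assumes fin: "finite J" and anti: "\<And>i j. \<not> (W i j \<and> W j i)"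
  defines "St \<equiv> {j\<in>J. k \<le> card {i\<in>J - {j}. W j i}}"
  shows "card St = 0 \<or> 2 * k + card St + 1 \<le> 2 * card J"
proof (cases "card St = 0")
  case True then show ?thesis by simp
next
  case False
  define S where "S = card St"
  have StJ: "St \<subseteq> J" unfolding St_def by auto
  have finSt: "finite St" using StJ fin finite_subset by blast
  have "S * k = (\<Sum>j\<in>St. k)" by (simp add: S_def)
  also have "\<dots> \<le> (\<Sum>j\<in>St. card {i\<in>J - {j}. W j i})"
    by (rule sum_mono) (simp add: St_def)
  also have "\<dots> = (\<Sum>j\<in>St. card {i\<in>St. W j i} + card {i\<in>J - St. W j i})"
  proof (rule sum.cong[OF refl])
    fix j assume j: "j \<in> St"
    have nW: "\<not> W j j" using anti by blast
    have "{i\<in>J - {j}. W j i} = {i\<in>St. W j i} \<union> {i\<in>J - St. W j i}" using StJ nW by auto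
    moreover have "finite {i\<in>St. W j i}" "finite {i\<in>J - St. W j i}" using finSt fin by auto
    ultimately show "card {i\<in>J - {j}. W j i} = card {i\<in>St. W j i} + card {i\<in>J - St. W j i}"
      by (simp add: card_Un_disjoint disjoint_iff)
  qed
  also have "\<dots> = (\<Sum>j\<in>St. card {i\<in>St. W j i}) + (\<Sum>j\<in>St. card {i\<in>J - St. W j i})"
    by (simp add: sum.distrib)
  finally have c1: "S * k \<le> (\<Sum>j\<in>St. card {i\<in>St. W j i}) + (\<Sum>j\<in>St. card {i\<in>J - St. W j i})" .
  have c2: "(\<Sum>j\<in>St. card {i\<in>St. W j i}) = card {p\<in>St \<times> St. W (fst p) (snd p)}"
  proof -
    have "{p\<in>St \<times> St. W (fst p) (snd p)} = (SIGMA j:St. {i\<in>St. W j i})" by auto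
    then show ?thesis using finSt by (simp add: card_SigmaI)
  qed
  have "(\<Sum>j\<in>St. card {i\<in>J - St. W j i}) \<le> (\<Sum>j\<in>St. card (J - St))"
    using fin by (intro sum_mono card_mono) auto
  also have "\<dots> = S * (card J - S)" using fin StJ by (simp add: S_def card_Diff_subset finSt)
  finally have c3: "(\<Sum>j\<in>St. card {i\<in>J - St. W j i}) \<le> S * (card J - S)" .
  have ineq: "2 * (S * k) \<le> (S * S - S) + 2 * (S * (card J - S))"
    using tournament_pairs[where W=W, OF finSt anti] c1 c2 c3 unfolding S_def by linarith
  have SJ: "S \<le> card J" unfolding S_def using StJ fin card_mono by blast
  have Spos: "S > 0" using False S_def by simp
  have "2 * k \<le> (S - 1) + 2 * (card J - S)"
  proof -
    have "S * (2 * k) \<le> S * ((S - 1) + 2 * (card J - S))"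
      using ineq by (simp add: algebra_simps diff_mult_distrib2)
    then show ?thesis using Spos by simp
  qed
  then show ?thesis using SJ Spos unfolding S_def by linarith
qed

lemma shat_nonneg:
  assumes "\<And>m x x'. \<Phi> m x x' \<ge> 0"
  shows "0 \<le> shat N \<mu> \<Phi> \<omega> i j"
  unfolding shat_def pw_def Kij_def score_def
  using assms by (intro sum_nonneg mult_nonneg_nonneg divide_nonneg_nonneg) auto

lemma splus_nonneg:
  assumes "\<And>m x x'. \<Phi> m x x' \<ge> 0"
  shows "0 \<le> splus N \<mu> \<Phi> \<omega> i j"
  unfolding splus_def using shat_nonneg[where \<Phi>=\<Phi>, OF assms] by simp

theorem proposition3:
  fixes MX :: "'x measure" and \<pi> :: "('x \<times> real) measure"
    and \<mu> :: "'x \<Rightarrow> real"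
    and \<Phi> :: "('x \<times> real) multiset \<Rightarrow> 'x \<Rightarrow> 'x \<Rightarrow> real"
    and N :: nat and \<alpha> :: real
  assumes prob: "prob_space \<pi>"
    and sets_\<pi>: "sets \<pi> = sets (MX \<Otimes>\<^sub>M borel)"
    and \<mu>_meas: "\<mu> \<in> borel_measurable MX"
    and \<Phi>_nonneg: "\<And>m x x'. \<Phi> m x x' \<ge> 0"
    and \<Phi>_meas: "(\<lambda>(z, x, x'). \<Phi> (image_mset z (mset_set {..<N - 1})) x x')
                   \<in> borel_measurable (PiM {..<N - 1} (\<lambda>_. \<pi>) \<Otimes>\<^sub>M MX \<Otimes>\<^sub>M MX)"
    and pos: "AE \<omega> in PiM (Jset N) (\<lambda>_. \<pi>).
               \<forall>i\<in>Jset N. \<forall>j\<in>Jset N. i \<noteq> j \<longrightarrow>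
                 (\<Sum>l\<in>Jset N - {i, j}. Kij N \<Phi> \<omega> i j (fst (\<omega> i)) (fst (\<omega> l))) > 0
                 \<and> shat N \<mu> \<Phi> \<omega> i j > 0"
    and \<alpha>: "0 \<le> \<alpha>" "\<alpha> \<le> 1"
  shows "measure (PiM (Jset N) (\<lambda>_. \<pi>))
           {\<omega> \<in> space (PiM (Jset N) (\<lambda>_. \<pi>)). snd (\<omega> (N + 1)) \<in> Cplus N \<alpha> \<mu> \<Phi> \<omega>}
         \<ge> 1 - 2 * \<alpha>"
proof -
  define P where "P = PiM (Jset N) (\<lambda>_. \<pi>)"
  define k where "k = nat \<lceil>(1 - \<alpha>) * real (N + 1)\<rceil>"
  define E where "E = {\<omega> \<in> space P. snd (\<omega> (N + 1)) \<in> Cplus N \<alpha> \<mu> \<Phi> \<omega>}"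
  define v where "v \<omega> i = shat N \<mu> \<Phi> \<omega> (N + 1) i * splus N \<mu> \<Phi> \<omega> i (N + 1)" for \<omega> i
  interpret P: prob_space P unfolding P_def by (rule prob_space_PiM) (rule prob)
  have N1J: "N + 1 \<in> Jset N" by (simp add: Jset_def)
  have lenL: "length (map (v \<omega>) [1..<N + 1]) = N" for \<omega> by simp
  have Qeq: "Qval N \<alpha> \<mu> \<Phi> \<omega> = kth_smallest k (map (v \<omega>) [1..<N + 1])" for \<omega>
    unfolding Qval_def k_def v_def ..
  have "measure P E \<ge> 1 - 2 * \<alpha>"
  proof (cases "\<alpha> < 1/2")
    case False
    then show ?thesis using measure_nonneg[of P E] by linarith
  next
    case True
    have kge: "(1 - \<alpha>) * real (N + 1) \<le> real k" unfolding k_def by (rule real_nat_ceiling_ge)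
    have k1: "1 \<le> k"
    proof -
      have "0 < (1 - \<alpha>) * real (N + 1)" using True by simp
      then show ?thesis using kge by linarith
    qed
    show ?thesis
    proof (cases "k \<le> N")
      case False
      have "E = space P"
        unfolding E_def Cplus_def Qeq kth_smallest_def using False by auto
      then show ?thesis using P.prob_space \<alpha> by simp
    next
      case kN: True
      define W where "W \<omega> j i \<longleftrightarrow> splus N \<mu> \<Phi> \<omega> i j < splus N \<mu> \<Phi> \<omega> j i" for \<omega> j i
      define S where "S j = {\<omega>\<in>space P. k \<le> card {i\<in>Jset N - {j}. W \<omega> j i}}" for j
      have vnn: "0 \<le> v \<omega> i" for \<omega> i
        unfolding v_def using shat_nonneg[where \<Phi>=\<Phi>, OF \<Phi>_nonneg] splus_nonneg[where \<Phi>=\<Phi>, OF \<Phi>_nonneg] by simp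
      have charE: "\<omega> \<in> E \<longleftrightarrow> \<omega> \<in> space P \<and> card {i\<in>{1..<N+1}. v \<omega> i < score \<mu> \<omega> (N + 1)} < k" for \<omega>
      proof -
        define L where "L = map (v \<omega>) [1..<N + 1]"
        define q where "q = sort L ! (k - 1)"
        have Q: "Qval N \<alpha> \<mu> \<Phi> \<omega> = ereal q"
          unfolding Qeq kth_smallest_def q_def L_def using kN by simp
        have "k - 1 < length (sort L)" using k1 kN by (simp add: L_def)
        then have "q \<in> set L" unfolding q_def by (metis nth_mem set_sort)
        then have q0: "0 \<le> q" unfolding L_def using vnn by auto
        have "snd (\<omega> (N + 1)) \<in> Cplus N \<alpha> \<mu> \<Phi> \<omega> \<longleftrightarrow> score \<mu> \<omega> (N + 1) \<le> q"
          unfolding Cplus_def Q score_def by (auto simp: abs_le_iff)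
        also have "\<dots> \<longleftrightarrow> length (filter (\<lambda>u. u < score \<mu> \<omega> (N + 1)) L) < k"
          unfolding q_def by (rule sorted_kth_iff) (use k1 kN L_def in auto)
        also have "length (filter (\<lambda>u. u < score \<mu> \<omega> (N + 1)) L) = card {i\<in>{1..<N+1}. v \<omega> i < score \<mu> \<omega> (N + 1)}"
        proof -
          have "length (filter (\<lambda>u. u < score \<mu> \<omega> (N + 1)) L)
              = length (filter (\<lambda>i. v \<omega> i < score \<mu> \<omega> (N + 1)) [1..<N + 1])"
            unfolding L_def by (simp add: filter_map comp_def)
          also have "\<dots> = card ({i. v \<omega> i < score \<mu> \<omega> (N + 1)} \<inter> set [1..<N + 1])"
            by (rule distinct_length_filter) simp
          also have "{i. v \<omega> i < score \<mu> \<omega> (N + 1)} \<inter> set [1..<N + 1] = {i\<in>{1..<N+1}. v \<omega> i < score \<mu> \<omega> (N + 1)}"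
            by auto
          finally show ?thesis .
        qed
        finally show ?thesis unfolding E_def by auto
      qed
      have E_sets: "E \<in> sets P"
      proof -
        have X: "{\<omega>\<in>space P. k \<le> card {i\<in>{1..<N+1}. v \<omega> i < score \<mu> \<omega> (N + 1)}} \<in> sets P"
          unfolding P_def v_def
          by (rule E_aux_sets[where MX=MX and \<pi>=\<pi> and \<mu>=\<mu> and \<Phi>=\<Phi> and N=N, OF sets_\<pi> \<mu>_meas \<Phi>_meas])
        have Eq: "E = space P - {\<omega>\<in>space P. k \<le> card {i\<in>{1..<N+1}. v \<omega> i < score \<mu> \<omega> (N + 1)}}"
        proof (rule set_eqI)
          fix \<omega>
          show "\<omega> \<in> E \<longleftrightarrow> \<omega> \<in> space P - {\<omega>\<in>space P. k \<le> card {i\<in>{1..<N+1}. v \<omega> i < score \<mu> \<omega> (N + 1)}}"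
            using charE[of \<omega>] by auto
        qed
        show ?thesis by (subst Eq) (rule sets.compl_sets[OF X])
      qed
      have S_sets: "S j \<in> sets P" if j: "j \<in> Jset N" for j
        unfolding S_def P_def W_def
        by (rule S_aux_sets[where MX=MX and \<pi>=\<pi> and \<mu>=\<mu> and \<Phi>=\<Phi> and N=N, OF sets_\<pi> \<mu>_meas \<Phi>_meas j])
      have pt: "\<omega> \<in> S (N + 1)" if \<omega>: "\<omega> \<in> space P - E"
        and hs: "\<forall>i\<in>Jset N - {N + 1}. shat N \<mu> \<Phi> \<omega> (N + 1) i > 0" for \<omega>
      proof -
        have c: "k \<le> card {i\<in>{1..<N+1}. v \<omega> i < score \<mu> \<omega> (N + 1)}"
          using \<omega> charE[of \<omega>] by (simp add: not_less)
        have "{i\<in>{1..<N+1}. v \<omega> i < score \<mu> \<omega> (N + 1)} = {i\<in>Jset N - {N + 1}. W \<omega> (N + 1) i}"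
        proof (intro Collect_cong conj_cong)
          fix i
          show "(i \<in> {1..<N+1}) = (i \<in> Jset N - {N + 1})" by (auto simp: Jset_def)
          assume i: "i \<in> Jset N - {N + 1}"
          define h where "h = shat N \<mu> \<Phi> \<omega> (N + 1) i"
          define x where "x = splus N \<mu> \<Phi> \<omega> i (N + 1)"
          have hpos: "h > 0" using hs i unfolding h_def by blast
          have sp: "splus N \<mu> \<Phi> \<omega> (N + 1) i = score \<mu> \<omega> (N + 1) / h"
            unfolding splus_def score_def h_def ..
          have "v \<omega> i = h * x" unfolding v_def h_def x_def ..
          then show "(v \<omega> i < score \<mu> \<omega> (N + 1)) = W \<omega> (N + 1) i"
            unfolding W_def sp x_def[symmetric] using pos_less_divide_eq[OF hpos, of x "score \<mu> \<omega> (N + 1)"]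
            by (simp add: mult.commute)
        qed
        then show ?thesis using c \<omega> unfolding S_def by simp
      qed
      have AE0: "AE \<omega> in P. \<forall>i\<in>Jset N - {N + 1}. shat N \<mu> \<Phi> \<omega> (N + 1) i > 0"
        using pos unfolding P_def[symmetric]
      proof (rule eventually_mono)
        fix \<omega> assume h: "\<forall>i\<in>Jset N. \<forall>j\<in>Jset N. i \<noteq> j \<longrightarrow>
                 (\<Sum>l\<in>Jset N - {i, j}. Kij N \<Phi> \<omega> i j (fst (\<omega> i)) (fst (\<omega> l))) > 0
                 \<and> shat N \<mu> \<Phi> \<omega> i j > 0"
        show "\<forall>i\<in>Jset N - {N + 1}. shat N \<mu> \<Phi> \<omega> (N + 1) i > 0"
        proof
          fix i assume "i \<in> Jset N - {N + 1}"
          then have "i \<in> Jset N" "N + 1 \<noteq> i" by auto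
          then show "shat N \<mu> \<Phi> \<omega> (N + 1) i > 0" using h N1J by blast
        qed
      qed
      have AE: "AE \<omega> in P. \<omega> \<in> space P - E \<longrightarrow> \<omega> \<in> S (N + 1)"
        using AE0 by (rule eventually_mono) (use pt in blast)
      have mono: "measure P (space P - E) \<le> measure P (S (N + 1))"
        by (rule P.finite_measure_mono_AE[OF AE S_sets[OF N1J]])
      have compl: "measure P (space P - E) = 1 - measure P E" by (rule P.prob_compl[OF E_sets])
      have swap: "measure P (S j) = measure P (S (N + 1))" if j: "j \<in> Jset N" for j
      proof -
        define \<tau> where "\<tau> n = (if n = j then N + 1 else if n = N + 1 then j else n)" for n
        have \<tau>J: "\<tau> n \<in> Jset N" if "n \<in> Jset N" for n using that j N1J by (simp add: \<tau>_def)
        have \<tau>\<tau>: "\<tau> (\<tau> n) = n" for n by (simp add: \<tau>_def)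
        have \<tau>N: "\<tau> (N + 1) = j" and \<tau>j: "\<tau> j = N + 1" by (simp_all add: \<tau>_def)
        have bij: "bij_betw \<tau> (Jset N) (Jset N)"
          by (rule bij_betw_byWitness[where f'=\<tau>]) (use \<tau>\<tau> \<tau>J in blast)+
        have inj: "inj_on \<tau> (Jset N)" using bij by (rule bij_betw_imp_inj_on)
        have PiJ: "\<tau> \<in> Jset N \<rightarrow> Jset N" using \<tau>J by blast
        define T where "T \<omega> = (\<lambda>n\<in>Jset N. \<omega> (\<tau> n))" for \<omega> :: "nat \<Rightarrow> 'x \<times> real"
        have Tm: "T \<in> measurable P P" unfolding T_def P_def
          by (intro measurable_restrict measurable_component_singleton \<tau>J)
        have dT: "distr P P T = P"
          unfolding P_def T_def
          by (rule distr_PiM_reindex[of "Jset N" "\<lambda>_. \<pi>" \<tau> "Jset N", OF prob inj PiJ])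
        have key: "k \<le> card {i\<in>Jset N - {N + 1}. W (T \<omega>) (N + 1) i} \<longleftrightarrow> k \<le> card {i\<in>Jset N - {j}. W \<omega> j i}" for \<omega>
        proof -
          have w: "\<forall>n\<in>Jset N. T \<omega> n = \<omega> (\<tau> n)" by (simp add: T_def)
          have "card {i\<in>Jset N - {N + 1}. W (T \<omega>) (N + 1) i} = card {i\<in>Jset N - {N + 1}. W \<omega> j (\<tau> i)}"
            apply (rule arg_cong[where f=card])
          proof (rule Collect_cong, rule conj_cong[OF refl])
            fix i assume "i \<in> Jset N - {N + 1}"
            then have iJ: "i \<in> Jset N" by simp
            show "W (T \<omega>) (N + 1) i = W \<omega> j (\<tau> i)"
              unfolding W_def perm_splus[OF bij iJ N1J w] perm_splus[OF bij N1J iJ w] \<tau>N ..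
          qed
          also have "\<dots> = card (\<tau> ` {i\<in>Jset N - {N + 1}. W \<omega> j (\<tau> i)})"
            by (rule card_image[symmetric]) (rule inj_on_subset[OF inj], blast)
          also have "\<tau> ` {i\<in>Jset N - {N + 1}. W \<omega> j (\<tau> i)} = {i\<in>Jset N - {j}. W \<omega> j i}"
          proof (intro set_eqI iffI)
            fix x assume "x \<in> \<tau> ` {i\<in>Jset N - {N + 1}. W \<omega> j (\<tau> i)}"
            then obtain i where i: "i \<in> Jset N" "i \<noteq> N + 1" "W \<omega> j (\<tau> i)" "x = \<tau> i" by blast
            have "\<tau> i \<noteq> j" using i(2) \<tau>\<tau>[of i] \<tau>j by metis
            then show "x \<in> {i\<in>Jset N - {j}. W \<omega> j i}" using i \<tau>J by blast
          next
            fix x assume x: "x \<in> {i\<in>Jset N - {j}. W \<omega> j i}"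
            have "\<tau> x \<noteq> N + 1" using x \<tau>\<tau>[of x] \<tau>N by (metis (mono_tags, lifting) Diff_iff insertI1 mem_Collect_eq)
            then have "\<tau> x \<in> {i\<in>Jset N - {N + 1}. W \<omega> j (\<tau> i)}" using x \<tau>J \<tau>\<tau>[of x] by simp
            then show "x \<in> \<tau> ` {i\<in>Jset N - {N + 1}. W \<omega> j (\<tau> i)}" using \<tau>\<tau>[of x] by (metis image_eqI)
          qed
          finally show ?thesis by simp
        qed
        have pre: "T -` S (N + 1) \<inter> space P = S j"
        proof (intro set_eqI iffI)
          fix \<omega>
          show "\<omega> \<in> T -` S (N + 1) \<inter> space P \<Longrightarrow> \<omega> \<in> S j" using key[of \<omega>] unfolding S_def by simp
          show "\<omega> \<in> S j \<Longrightarrow> \<omega> \<in> T -` S (N + 1) \<inter> space P"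
            using key[of \<omega>] measurable_space[OF Tm, of \<omega>] unfolding S_def by simp
        qed
        have "measure P (S j) = measure P (T -` S (N + 1) \<inter> space P)" using pre by simp
        also have "\<dots> = measure (distr P P T) (S (N + 1))"
          by (rule measure_distr[symmetric, OF Tm S_sets[OF N1J]])
        finally show ?thesis using dT by simp
      qed
      have pw_bound: "(\<Sum>j\<in>Jset N. indicator (S j) \<omega>) \<le> 2 * \<alpha> * real (N + 1)" if \<omega>: "\<omega> \<in> space P" for \<omega>
      proof -
        define St where "St = {j\<in>Jset N. k \<le> card {i\<in>Jset N - {j}. W \<omega> j i}}"
        have finJ: "finite (Jset N)" by (simp add: Jset_def)
        have "(\<Sum>j\<in>Jset N. indicator (S j) \<omega> :: real) = (\<Sum>j\<in>Jset N. if j \<in> St then 1 else 0)"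
        proof (rule sum.cong[OF refl])
          fix j assume "j \<in> Jset N"
          have "\<omega> \<in> S j \<longleftrightarrow> j \<in> St" using \<omega> \<open>j \<in> Jset N\<close> unfolding S_def St_def by simp
          then show "indicator (S j) \<omega> = (if j \<in> St then 1 else (0::real))" by (simp add: indicator_def)
        qed
        also have "\<dots> = (\<Sum>j\<in>{j\<in>Jset N. j \<in> St}. 1)"
          by (rule sum.inter_filter[symmetric, OF finJ])
        also have "{j\<in>Jset N. j \<in> St} = St" unfolding St_def by blast
        finally have eq: "(\<Sum>j\<in>Jset N. indicator (S j) \<omega> :: real) = real (card St)" by simp
        have anti: "\<And>i j. \<not> (W \<omega> i j \<and> W \<omega> j i)" unfolding W_def by linarith
        have tb: "card St = 0 \<or> 2 * k + card St + 1 \<le> 2 * card (Jset N)"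
          unfolding St_def by (rule tournament_bound[OF finJ anti])
        then have "real (card St) \<le> 2 * \<alpha> * real (N + 1)"
        proof
          assume "card St = 0" then show ?thesis using \<alpha> by simp
        next
          assume "2 * k + card St + 1 \<le> 2 * card (Jset N)"
          then have "2 * real k + real (card St) + 1 \<le> 2 * real (N + 1)"
            unfolding card_Jset by linarith
          then show ?thesis using kge by (simp add: algebra_simps)
        qed
        then show ?thesis using eq by simp
      qed
      have fin: "emeasure P (S j) < \<infinity>" for j using P.emeasure_finite[of "S j"] by (simp add: less_top[symmetric])
      have intS: "integrable P (indicator (S j) :: _ \<Rightarrow> real)" if "j \<in> Jset N" for j
        by (rule integrable_real_indicator[OF S_sets[OF that] fin])
      have "real (N + 1) * measure P (S (N + 1)) = (\<Sum>j\<in>Jset N. measure P (S j))"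
        using swap by (simp add: card_Jset)
      also have "\<dots> = (\<Sum>j\<in>Jset N. integral\<^sup>L P (indicator (S j)))"
      proof (rule sum.cong[OF refl])
        fix j assume j: "j \<in> Jset N"
        have "S j \<inter> space P = S j" using sets.sets_into_space[OF S_sets[OF j]] by blast
        then show "measure P (S j) = integral\<^sup>L P (indicator (S j))" by simp
      qed
      also have "\<dots> = integral\<^sup>L P (\<lambda>\<omega>. \<Sum>j\<in>Jset N. indicator (S j) \<omega>)"
        by (rule Bochner_Integration.integral_sum[where I="Jset N" and M=P and f="\<lambda>j \<omega>. indicator (S j) \<omega>", symmetric]) (rule intS)
      also have "\<dots> \<le> 2 * \<alpha> * real (N + 1)"
      proof (rule P.integral_le_const)
        show "integrable P (\<lambda>\<omega>. \<Sum>j\<in>Jset N. indicator (S j) \<omega> :: real)"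
          by (rule Bochner_Integration.integrable_sum[where I="Jset N" and M=P and f="\<lambda>j \<omega>. indicator (S j) \<omega>"]) (rule intS)
        show "AE \<omega> in P. (\<Sum>j\<in>Jset N. indicator (S j) \<omega> :: real) \<le> 2 * \<alpha> * real (N + 1)"
          by (rule AE_I2) (rule pw_bound)
      qed
      finally have "measure P (S (N + 1)) \<le> 2 * \<alpha>" by (simp add: mult.commute)
      then show ?thesis using mono compl by linarith
    qed
  qed
  then show ?thesis unfolding E_def P_def .
qed

end
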